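(* There exists a network $G$ with three sources $s_1,s_2,s_3$ and three terminals $t_1,t_2,t_3$ in which every source–terminal pair $(s_i,t_j)$ is connected by at least one directed path, but for every finite field $\mathbb{F}$ with $|\mathbb{F}|\ge 2$ there is no network code (linear or nonlinear, scalar) over $\mathbb{F}$ under which every terminal can recover $X_1+X_2+X_3$ with zero error.
   Context: A network is a finite directed acyclic graph (parallel edges allowed) in which every edge has unit capacity and carries one symbol of a finite field $\mathbb{F}$ per use. Sources are vertices with no incoming edges; source $s_i$ holds $X_i\in\mathbb{F}$, the $X_i$ independent and uniformly distributed. Terminals are vertices with no outgoing edges. A (scalar) network code assigns to each edge leaving a source $s_i$ a function of $X_i$, and to each edge leaving a non-source vertex $v$ a function of the symbols on the edges entering $v$, with values in $\mathbb{F}$. A terminal recovers a quantity with zero error if that quantity is a (deterministic) function of the symbols on the terminal's incoming edges, for all values of the sources. *)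

theory Defs
  imports "HOL-Algebra.Ring" "HOL-Library.FuncSet"
begin

text \<open>A network: vertex set V, edge set E (edges are identifiers, so parallel
edges are allowed), tail map tail and head map head.\<close>

definition edge_rel :: "nat set \<Rightarrow> (nat \<Rightarrow> nat) \<Rightarrow> (nat \<Rightarrow> nat) \<Rightarrow> (nat \<times> nat) set" where
  "edge_rel E tail head = {(tail e, head e) | e. e \<in> E}"

definition in_edges :: "nat set \<Rightarrow> (nat \<Rightarrow> nat) \<Rightarrow> nat \<Rightarrow> nat set" where
  "in_edges E head v = {e \<in> E. head e = v}"

definition is_network :: "nat set \<Rightarrow> nat set \<Rightarrow> (nat \<Rightarrow> nat) \<Rightarrow> (nat \<Rightarrow> nat) \<Rightarrow> bool" where
  "is_network V E tail head \<longleftrightarrow> finite V \<and> finite E \<and>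
     (\<forall>e\<in>E. tail e \<in> V \<and> head e \<in> V) \<and> acyclic (edge_rel E tail head)"

definition sources :: "nat set \<Rightarrow> nat set \<Rightarrow> (nat \<Rightarrow> nat) \<Rightarrow> nat set" where
  "sources V E head = {v \<in> V. in_edges E head v = {}}"

definition terminals :: "nat set \<Rightarrow> nat set \<Rightarrow> (nat \<Rightarrow> nat) \<Rightarrow> nat set" where
  "terminals V E tail = {v \<in> V. \<forall>e\<in>E. tail e \<noteq> v}"

definition src_vals :: "('a, 'b) ring_scheme \<Rightarrow> (nat \<Rightarrow> 'a) set" where
  "src_vals R = {1, 2, 3} \<rightarrow>\<^sub>E carrier R"

text \<open>A scalar network code, described by the global symbol y e x carried by edge e
when the source messages are x.\<close>

definition is_network_code ::
  "('a, 'b) ring_scheme \<Rightarrow> nat set \<Rightarrow> nat set \<Rightarrow> (nat \<Rightarrow> nat) \<Rightarrow> (nat \<Rightarrow> nat)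
     \<Rightarrow> (nat \<Rightarrow> nat) \<Rightarrow> (nat \<Rightarrow> (nat \<Rightarrow> 'a) \<Rightarrow> 'a) \<Rightarrow> bool" where
  "is_network_code R V E tail head src y \<longleftrightarrow>
     (\<forall>e\<in>E. \<forall>x\<in>src_vals R. y e x \<in> carrier R) \<and>
     (\<forall>e\<in>E. \<forall>i\<in>{1, 2, 3}. tail e = src i \<longrightarrow>
        (\<exists>g. \<forall>x\<in>src_vals R. y e x = g (x i))) \<and>
     (\<forall>e\<in>E. tail e \<notin> sources V E head \<longrightarrow>
        (\<exists>\<phi>. \<forall>x\<in>src_vals R. y e x = \<phi> (restrict (\<lambda>e'. y e' x) (in_edges E head (tail e)))))"

definition recovers_sum ::
  "('a, 'b) ring_scheme \<Rightarrow> nat set \<Rightarrow> (nat \<Rightarrow> nat) \<Rightarrow> (nat \<Rightarrow> (nat \<Rightarrow> 'a) \<Rightarrow> 'a) \<Rightarrow> nat \<Rightarrow> bool" where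
  "recovers_sum R E head y t \<longleftrightarrow>
     (\<exists>\<psi>. \<forall>x\<in>src_vals R.
        \<psi> (restrict (\<lambda>e. y e x) (in_edges E head t)) = x 1 \<oplus>\<^bsub>R\<^esub> x 2 \<oplus>\<^bsub>R\<^esub> x 3)"

end

theory Submission
  imports Defs
begin

definition tl0 :: "nat \<Rightarrow> nat" where "tl0 e = [1,2,4,5,5,3,2,3,6,7,7,1] ! e"
definition hd0 :: "nat \<Rightarrow> nat" where "hd0 e = [4,4,5,8,9,8,6,6,7,9,10,10] ! e"
definition E0 :: "nat set" where "E0 = {0,1,2,3,4,5,6,7,8,9,10,11}"
definition V0 :: "nat set" where "V0 = {1,2,3,4,5,6,7,8,9,10}"

lemma er0: "edge_rel E0 tl0 hd0 = {(1,4),(2,4),(4,5),(5,8),(5,9),(3,8),(2,6),(3,6),(6,7),(7,9),(7,10),(1,10)}"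
proof -
  have "edge_rel E0 tl0 hd0 = (\<lambda>e. (tl0 e, hd0 e)) ` E0" by (auto simp: edge_rel_def)
  then show ?thesis by (simp add: E0_def tl0_def hd0_def insert_commute)
qed

lemma ie4: "in_edges E0 hd0 4 = {0,1}" by (auto simp: in_edges_def E0_def hd0_def)
lemma ie5: "in_edges E0 hd0 5 = {2}" by (auto simp: in_edges_def E0_def hd0_def)
lemma ie6: "in_edges E0 hd0 6 = {6,7}" by (auto simp: in_edges_def E0_def hd0_def)
lemma ie7: "in_edges E0 hd0 7 = {8}" by (auto simp: in_edges_def E0_def hd0_def)
lemma ie8: "in_edges E0 hd0 8 = {3,5}" by (auto simp: in_edges_def E0_def hd0_def)
lemma ie9: "in_edges E0 hd0 9 = {4,9}" by (auto simp: in_edges_def E0_def hd0_def)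
lemma ie10: "in_edges E0 hd0 10 = {10,11}" by (auto simp: in_edges_def E0_def hd0_def)

lemma hd_img: "hd0 ` E0 = {4,5,6,7,8,9,10}"
  by (simp add: E0_def hd0_def insert_commute)
lemma tl_img: "tl0 ` E0 = {1,2,3,4,5,6,7}"
  by (simp add: E0_def tl0_def insert_commute)

lemma srcs0: "sources V0 E0 hd0 = {1,2,3}"
proof -
  have "sources V0 E0 hd0 = {v \<in> V0. v \<notin> hd0 ` E0}"
    unfolding sources_def in_edges_def by blast
  also have "\<dots> = {1,2,3}" unfolding hd_img V0_def by auto
  finally show ?thesis .
qed

lemma terms0: "terminals V0 E0 tl0 = {8,9,10}"
proof -
  have "terminals V0 E0 tl0 = {v \<in> V0. v \<notin> tl0 ` E0}"
    unfolding terminals_def by blast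
  also have "\<dots> = {8,9,10}" unfolding tl_img V0_def by auto
  finally show ?thesis .
qed

lemma src_det:
  assumes "is_network_code R V E tail head src y" "e \<in> E" "i \<in> {1,2,3}" "tail e = src i"
    "x \<in> src_vals R" "x' \<in> src_vals R" "x i = x' i"
  shows "y e x = y e x'"
proof -
  from assms(1-4) obtain g where "\<forall>x\<in>src_vals R. y e x = g (x i)"
    unfolding is_network_code_def by blast
  with assms(5-7) show ?thesis by simp
qed

lemma inner_det:
  assumes "is_network_code R V E tail head src y" "e \<in> E" "tail e \<notin> sources V E head"
    "x \<in> src_vals R" "x' \<in> src_vals R"
    "\<And>e'. e' \<in> in_edges E head (tail e) \<Longrightarrow> y e' x = y e' x'"
  shows "y e x = y e x'"
proof -
  from assms(1-3) obtain \<phi> where p: "\<forall>x\<in>src_vals R. y e x = \<phi> (restrict (\<lambda>e'. y e' x) (in_edges E head (tail e)))"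
    unfolding is_network_code_def by blast
  have "restrict (\<lambda>e'. y e' x) (in_edges E head (tail e)) = restrict (\<lambda>e'. y e' x') (in_edges E head (tail e))"
    by (rule restrict_ext) (rule assms(6))
  with p assms(4,5) show ?thesis by simp
qed

lemma term_det:
  assumes "recovers_sum R E head y t" "x \<in> src_vals R" "x' \<in> src_vals R"
    "\<And>e'. e' \<in> in_edges E head t \<Longrightarrow> y e' x = y e' x'"
  shows "x 1 \<oplus>\<^bsub>R\<^esub> x 2 \<oplus>\<^bsub>R\<^esub> x 3 = x' 1 \<oplus>\<^bsub>R\<^esub> x' 2 \<oplus>\<^bsub>R\<^esub> x' 3"
proof -
  from assms(1) obtain \<psi> where p: "\<forall>x\<in>src_vals R.
        \<psi> (restrict (\<lambda>e. y e x) (in_edges E head t)) = x 1 \<oplus>\<^bsub>R\<^esub> x 2 \<oplus>\<^bsub>R\<^esub> x 3"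
    unfolding recovers_sum_def by blast
  have "restrict (\<lambda>e'. y e' x) (in_edges E head t) = restrict (\<lambda>e'. y e' x') (in_edges E head t)"
    by (rule restrict_ext) (rule assms(4))
  with p assms(2,3) show ?thesis by metis
qed

definition pt :: "'a \<Rightarrow> 'a \<Rightarrow> 'a \<Rightarrow> nat \<Rightarrow> 'a" where
  "pt a b c = (\<lambda>i. if i = 1 then a else if i = 2 then b else if i = 3 then c else undefined)"

lemma pt_in: "a \<in> carrier R \<Longrightarrow> b \<in> carrier R \<Longrightarrow> c \<in> carrier R \<Longrightarrow> pt a b c \<in> src_vals R"
  by (auto simp: src_vals_def pt_def PiE_def extensional_def)

lemma pt_simps[simp]: "pt a b c 1 = a" "pt a b c (Suc 0) = a" "pt a b c 2 = b" "pt a b c 3 = c"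
  by (auto simp: pt_def)

lemma E0_mem: "0 \<in> E0" "1 \<in> E0" "2 \<in> E0" "3 \<in> E0" "4 \<in> E0" "5 \<in> E0"
  "6 \<in> E0" "7 \<in> E0" "8 \<in> E0" "9 \<in> E0" "10 \<in> E0" "11 \<in> E0" "Suc 0 \<in> E0"
  by (simp_all add: E0_def)

lemma tl0_simps: "tl0 0 = 1" "tl0 1 = 2" "tl0 2 = 4" "tl0 3 = 5" "tl0 4 = 5" "tl0 5 = 3"
  "tl0 6 = 2" "tl0 7 = 3" "tl0 8 = 6" "tl0 9 = 7" "tl0 10 = 7" "tl0 11 = 1" "tl0 (Suc 0) = 2"
  by (simp_all add: tl0_def)

lemma nsrc: "(4::nat) \<notin> sources V0 E0 hd0" "(5::nat) \<notin> sources V0 E0 hd0"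
  "(6::nat) \<notin> sources V0 E0 hd0" "(7::nat) \<notin> sources V0 E0 hd0"
  by (simp_all add: srcs0)

lemma (in field) no_code:
  assumes fin: "finite (carrier R)" and code: "is_network_code R V0 E0 tl0 hd0 id y"
    and rec: "\<forall>t\<in>{8,9,10}. recovers_sum R E0 hd0 y t"
  shows False
proof -
  have r8: "recovers_sum R E0 hd0 y 8" and r9: "recovers_sum R E0 hd0 y 9"
    and r10: "recovers_sum R E0 hd0 y 10" using rec by simp_all
  have ycar: "\<And>e x. e \<in> E0 \<Longrightarrow> x \<in> src_vals R \<Longrightarrow> y e x \<in> carrier R"
    using code unfolding is_network_code_def by blast
  have D2: "y 2 x = y 2 x'" if "x\<in>src_vals R" "x'\<in>src_vals R" "x 1 = x' 1" "x 2 = x' 2" for x x'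
  proof -
    have h0: "y 0 x = y 0 x'"
      apply (rule src_det[OF code, where e=0 and i=1]) using that by (simp_all add: E0_mem tl0_simps)
    have h1: "y 1 x = y 1 x'"
      apply (rule src_det[OF code, where e=1 and i=2]) using that by (simp_all add: E0_mem tl0_simps)
    show ?thesis
      apply (rule inner_det[OF code, where e=2]) using that h0 h1
      by (auto simp: E0_mem tl0_simps nsrc ie4)
  qed
  have D8: "y 8 x = y 8 x'" if "x\<in>src_vals R" "x'\<in>src_vals R" "x 2 = x' 2" "x 3 = x' 3" for x x'
  proof -
    have h0: "y 6 x = y 6 x'"
      apply (rule src_det[OF code, where e=6 and i=2]) using that by (simp_all add: E0_mem tl0_simps)
    have h1: "y 7 x = y 7 x'"
      apply (rule src_det[OF code, where e=7 and i=3]) using that by (simp_all add: E0_mem tl0_simps)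
    show ?thesis
      apply (rule inner_det[OF code, where e=8]) using that h0 h1
      by (auto simp: E0_mem tl0_simps nsrc ie6)
  qed
  have T1: "x 1 \<oplus> x 2 \<oplus> x 3 = x' 1 \<oplus> x' 2 \<oplus> x' 3"
    if "x\<in>src_vals R" "x'\<in>src_vals R" "y 2 x = y 2 x'" "x 3 = x' 3" for x x'
  proof -
    have h0: "y 3 x = y 3 x'"
      apply (rule inner_det[OF code, where e=3]) using that
      by (auto simp: E0_mem tl0_simps nsrc ie5)
    have h1: "y 5 x = y 5 x'"
      apply (rule src_det[OF code, where e=5 and i=3]) using that by (simp_all add: E0_mem tl0_simps)
    show ?thesis
      apply (rule term_det[OF r8]) using that h0 h1 by (auto simp: ie8)
  qed
  have T3: "x 1 \<oplus> x 2 \<oplus> x 3 = x' 1 \<oplus> x' 2 \<oplus> x' 3"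
    if "x\<in>src_vals R" "x'\<in>src_vals R" "y 8 x = y 8 x'" "x 1 = x' 1" for x x'
  proof -
    have h0: "y 10 x = y 10 x'"
      apply (rule inner_det[OF code, where e=10]) using that
      by (auto simp: E0_mem tl0_simps nsrc ie7)
    have h1: "y 11 x = y 11 x'"
      apply (rule src_det[OF code, where e=11 and i=1]) using that by (simp_all add: E0_mem tl0_simps)
    show ?thesis
      apply (rule term_det[OF r10]) using that h0 h1 by (auto simp: ie10)
  qed
  have T2: "x 1 \<oplus> x 2 \<oplus> x 3 = x' 1 \<oplus> x' 2 \<oplus> x' 3"
    if "x\<in>src_vals R" "x'\<in>src_vals R" "y 2 x = y 2 x'" "y 8 x = y 8 x'" for x x'
  proof -
    have h0: "y 4 x = y 4 x'"
      apply (rule inner_det[OF code, where e=4]) using that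
      by (auto simp: E0_mem tl0_simps nsrc ie5)
    have h1: "y 9 x = y 9 x'"
      apply (rule inner_det[OF code, where e=9]) using that
      by (auto simp: E0_mem tl0_simps nsrc ie7)
    show ?thesis
      apply (rule term_det[OF r9]) using that h0 h1 by (auto simp: ie9)
  qed
  have z: "\<zero> \<in> carrier R" and o: "\<one> \<in> carrier R" and m: "\<ominus> \<one> \<in> carrier R" by simp_all
  have om: "\<one> \<oplus> \<ominus> \<one> = \<zero>" by (simp add: r_neg)
  have mo: "\<ominus> \<one> \<oplus> \<one> = \<zero>" by (simp add: l_neg)
  define A where "A c = y 2 (pt c \<zero> \<zero>)" for c
  have "inj_on A (carrier R)"
  proof (rule inj_onI)
    fix c d assume c: "c \<in> carrier R" and d: "d \<in> carrier R" and "A c = A d"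
    then have "c \<oplus> \<zero> \<oplus> \<zero> = d \<oplus> \<zero> \<oplus> \<zero>"
      using T1[OF pt_in[OF c z z] pt_in[OF d z z]] unfolding A_def by simp
    with c d show "c = d" by simp
  qed
  moreover have "A ` carrier R \<subseteq> carrier R"
    unfolding A_def using ycar[OF E0_mem(3) pt_in[OF _ z z]] by blast
  ultimately have Asurj: "A ` carrier R = carrier R" using fin by (simp add: endo_inj_surj)
  have "y 2 (pt \<one> (\<ominus> \<one>) \<zero>) \<in> carrier R" using ycar[OF E0_mem(3) pt_in[OF o m z]] .
  then obtain d where d: "d \<in> carrier R" "y 2 (pt \<one> (\<ominus> \<one>) \<zero>) = A d"
    using Asurj by (metis imageE)
  then have "\<one> \<oplus> \<ominus> \<one> \<oplus> \<zero> = d \<oplus> \<zero> \<oplus> \<zero>"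
    using T1[OF pt_in[OF o m z] pt_in[OF d(1) z z]] unfolding A_def by simp
  then have "d = \<zero>" using d om by simp
  with d have "y 2 (pt \<one> (\<ominus> \<one>) \<zero>) = y 2 (pt \<zero> \<zero> \<zero>)" unfolding A_def by simp
  moreover have "y 2 (pt \<one> (\<ominus> \<one>) \<one>) = y 2 (pt \<one> (\<ominus> \<one>) \<zero>)"
    using D2[OF pt_in[OF o m o] pt_in[OF o m z]] by simp
  ultimately have Y2: "y 2 (pt \<one> (\<ominus> \<one>) \<one>) = y 2 (pt \<zero> \<zero> \<zero>)" by simp
  define B where "B c = y 8 (pt \<zero> \<zero> c)" for c
  have "inj_on B (carrier R)"
  proof (rule inj_onI)
    fix c d assume c: "c \<in> carrier R" and d: "d \<in> carrier R" and "B c = B d"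
    then have "\<zero> \<oplus> \<zero> \<oplus> c = \<zero> \<oplus> \<zero> \<oplus> d"
      using T3[OF pt_in[OF z z c] pt_in[OF z z d]] unfolding B_def by simp
    with c d show "c = d" by simp
  qed
  moreover have "B ` carrier R \<subseteq> carrier R"
    unfolding B_def using ycar[OF E0_mem(9) pt_in[OF z z]] by blast
  ultimately have Bsurj: "B ` carrier R = carrier R" using fin by (simp add: endo_inj_surj)
  have "y 8 (pt \<zero> (\<ominus> \<one>) \<one>) \<in> carrier R" using ycar[OF E0_mem(9) pt_in[OF z m o]] .
  then obtain d' where d': "d' \<in> carrier R" "y 8 (pt \<zero> (\<ominus> \<one>) \<one>) = B d'"
    using Bsurj by (metis imageE)
  then have "\<zero> \<oplus> \<ominus> \<one> \<oplus> \<one> = \<zero> \<oplus> \<zero> \<oplus> d'"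
    using T3[OF pt_in[OF z m o] pt_in[OF z z d'(1)]] unfolding B_def by simp
  then have "d' = \<zero>" using d' mo by simp
  with d' have "y 8 (pt \<zero> (\<ominus> \<one>) \<one>) = y 8 (pt \<zero> \<zero> \<zero>)" unfolding B_def by simp
  moreover have "y 8 (pt \<one> (\<ominus> \<one>) \<one>) = y 8 (pt \<zero> (\<ominus> \<one>) \<one>)"
    using D8[OF pt_in[OF o m o] pt_in[OF z m o]] by simp
  ultimately have Y8: "y 8 (pt \<one> (\<ominus> \<one>) \<one>) = y 8 (pt \<zero> \<zero> \<zero>)" by simp
  have "\<one> \<oplus> \<ominus> \<one> \<oplus> \<one> = \<zero> \<oplus> \<zero> \<oplus> \<zero>"
    using T2[OF pt_in[OF o m o] pt_in[OF z z z] Y2 Y8] by simp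
  then have "\<one> = \<zero>" using om by simp
  then show False by simp
qed

lemma acyc_less: "acyclic {(a::nat, b). a < b}"
proof -
  have "trans {(a::nat, b). a < b}" by (auto simp: trans_def)
  then have "{(a::nat, b). a < b}\<^sup>+ = {(a::nat, b). a < b}" by (rule trancl_id)
  then show ?thesis by (simp add: acyclic_def)
qed

theorem mainTheorem5:
  shows "\<exists>(V :: nat set) (E :: nat set) (tail :: nat \<Rightarrow> nat) (head :: nat \<Rightarrow> nat)
            (src :: nat \<Rightarrow> nat) (T :: nat set).
    is_network V E tail head \<and>
    inj_on src {1, 2, 3} \<and> sources V E head = src ` {1, 2, 3} \<and>
    card T = 3 \<and> terminals V E tail = T \<and>
    (\<forall>i\<in>{1, 2, 3}. \<forall>t\<in>T. (src i, t) \<in> (edge_rel E tail head)\<^sup>+) \<and>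
    (\<forall>R :: nat ring. field R \<and> finite (carrier R) \<longrightarrow>
       \<not> (\<exists>y. is_network_code R V E tail head src y \<and> (\<forall>t\<in>T. recovers_sum R E head y t)))"
proof (intro exI conjI)
  show "is_network V0 E0 tl0 hd0"
    unfolding is_network_def
  proof (intro conjI)
    show "acyclic (edge_rel E0 tl0 hd0)"
      by (rule acyclic_subset[OF acyc_less]) (auto simp: er0)
  qed (auto simp: V0_def E0_def tl0_def hd0_def)
  show "inj_on id {1,2,3::nat}" by simp
  show "sources V0 E0 hd0 = id ` {1,2,3}" by (simp add: srcs0)
  show "card {8,9,10::nat} = 3" by simp
  show "terminals V0 E0 tl0 = {8,9,10}" by (rule terms0)
  show "\<forall>i\<in>{1, 2, 3}. \<forall>t\<in>{8,9,10}. (id i, t) \<in> (edge_rel E0 tl0 hd0)\<^sup>+"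
  proof -
    let ?r = "{(1,4),(2,4),(4,5),(5,8),(5,9),(3,8),(2,6),(3,6),(6,7),(7,9),(7,10),(1,10)} :: (nat*nat) set"
    have "(1,8) \<in> ?r\<^sup>+" by (rule trancl_into_trancl2[where b=4], simp, rule trancl_into_trancl2[where b=5], simp, rule r_into_trancl, simp)
    moreover
    have "(1,9) \<in> ?r\<^sup>+" by (rule trancl_into_trancl2[where b=4], simp, rule trancl_into_trancl2[where b=5], simp, rule r_into_trancl, simp)
    moreover
    have "(1,10) \<in> ?r\<^sup>+" by (rule r_into_trancl, simp)
    moreover
    have "(2,8) \<in> ?r\<^sup>+" by (rule trancl_into_trancl2[where b=4], simp, rule trancl_into_trancl2[where b=5], simp, rule r_into_trancl, simp)
    moreover
    have "(2,9) \<in> ?r\<^sup>+" by (rule trancl_into_trancl2[where b=4], simp, rule trancl_into_trancl2[where b=5], simp, rule r_into_trancl, simp)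
    moreover
    have "(2,10) \<in> ?r\<^sup>+" by (rule trancl_into_trancl2[where b=6], simp, rule trancl_into_trancl2[where b=7], simp, rule r_into_trancl, simp)
    moreover
    have "(3,8) \<in> ?r\<^sup>+" by (rule r_into_trancl, simp)
    moreover
    have "(3,9) \<in> ?r\<^sup>+" by (rule trancl_into_trancl2[where b=6], simp, rule trancl_into_trancl2[where b=7], simp, rule r_into_trancl, simp)
    moreover
    have "(3,10) \<in> ?r\<^sup>+" by (rule trancl_into_trancl2[where b=6], simp, rule trancl_into_trancl2[where b=7], simp, rule r_into_trancl, simp)
    moreover
    ultimately show ?thesis unfolding er0 by simp
  qed
  show "\<forall>R :: nat ring. field R \<and> finite (carrier R) \<longrightarrow>
       \<not> (\<exists>y. is_network_code R V0 E0 tl0 hd0 id y \<and> (\<forall>t\<in>{8,9,10}. recovers_sum R E0 hd0 y t))"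
    using field.no_code by blast
qed

end
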